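(* Let $\mathcal K$ be a quantum channel on $n\times n$ matrices described by Kraus operators $K_1,\dots,K_d\in\mathbb C^{n\times n}$ (with $\mathcal K(\rho)=\sum_j K_j\rho K_j^\dagger$, $\sum_j K_j^\dagger K_j=I_n$). Then $$\cos^{-1}\left[\frac1n\sqrt{\sum_{j=1}^d\lvert\mathrm{Tr}(K_j)\rvert^2}\right]\le\lVert\mathcal K\rVert,$$ with $\cos^{-1}$ taking values in $[0,\pi]$.
   Context: For a unitary matrix $U$ of size $r$ with eigenvalues $e^{i\theta_j}$, $\theta_j\in(-\pi,\pi]$, its time-energy cost is $\lVert U\rVert=\max_{1\le j\le r}|\theta_j|$. For a quantum channel $\mathcal K$ acting on an $n$-dimensional system $A$, its time-energy cost is $\lVert\mathcal K\rVert=\inf_U\lVert U\rVert$, where the infimum is over all finite-dimensional ancilla systems $B$ with a fixed standard state $|0\rangle_B$ and all unitaries $U_{BA}$ on $B\otimes A$ such that $\mathcal K(\rho)=\mathrm{Tr}_B[U_{BA}(|0\rangle_B\langle 0|\otimes\rho_A)U_{BA}^\dagger]$ for all density matrices $\rho$ on $A$. *)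

theory Defs
  imports "HOL-Analysis.Analysis" "Jordan_Normal_Form.Matrix" "Jordan_Normal_Form.Char_Poly"
begin

definition dag :: "complex mat \<Rightarrow> complex mat" where
  "dag A = mat (dim_col A) (dim_row A) (\<lambda>(i,j). cnj (A $$ (j,i)))"

definition mtrace :: "complex mat \<Rightarrow> complex" where
  "mtrace A = (\<Sum>i<dim_row A. A $$ (i,i))"

definition is_unitary :: "nat \<Rightarrow> complex mat \<Rightarrow> bool" where
  "is_unitary N U \<longleftrightarrow> U \<in> carrier_mat N N \<and> dag U * U = 1\<^sub>m N"

definition density :: "nat \<Rightarrow> complex mat \<Rightarrow> bool" where
  "density n \<rho> \<longleftrightarrow> \<rho> \<in> carrier_mat n n \<and> dag \<rho> = \<rho>
     \<and> (\<forall>v \<in> carrier_vec n. 0 \<le> Re (\<Sum>i<n. cnj (v $ i) * (\<rho> *\<^sub>v v) $ i))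
     \<and> mtrace \<rho> = 1"

text \<open>Kronecker product B \<otimes> A of an m x m and an n x n matrix; basis index (b,a) is b*n+a.\<close>
definition kron :: "nat \<Rightarrow> nat \<Rightarrow> complex mat \<Rightarrow> complex mat \<Rightarrow> complex mat" where
  "kron m n X Y = mat (m*n) (m*n) (\<lambda>(i,j). X $$ (i div n, j div n) * Y $$ (i mod n, j mod n))"

definition proj0 :: "nat \<Rightarrow> complex mat" where
  "proj0 m = mat m m (\<lambda>(i,j). if i = 0 \<and> j = 0 then 1 else 0)"

definition ptrace_B :: "nat \<Rightarrow> nat \<Rightarrow> complex mat \<Rightarrow> complex mat" where
  "ptrace_B m n X = mat n n (\<lambda>(a,a'). \<Sum>b<m. X $$ (b*n+a, b*n+a'))"

definition kraus_apply :: "nat \<Rightarrow> complex mat list \<Rightarrow> complex mat \<Rightarrow> complex mat" where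
  "kraus_apply n Ks \<rho> = foldr (\<lambda>K acc. K * \<rho> * dag K + acc) Ks (0\<^sub>m n n)"

definition kraus_channel :: "nat \<Rightarrow> complex mat list \<Rightarrow> bool" where
  "kraus_channel n Ks \<longleftrightarrow> (\<forall>K \<in> set Ks. K \<in> carrier_mat n n)
     \<and> foldr (\<lambda>K acc. dag K * K + acc) Ks (0\<^sub>m n n) = 1\<^sub>m n"

text \<open>Time-energy cost of a unitary: max |theta_j| over eigenvalues e^{i theta_j}, theta_j in (-pi,pi].\<close>
definition unitary_cost :: "complex mat \<Rightarrow> real" where
  "unitary_cost U = Max {abs (Arg z) | z. eigenvalue U z}"

definition channel_cost :: "nat \<Rightarrow> complex mat list \<Rightarrow> real" where
  "channel_cost n Ks = Inf {unitary_cost U | U. \<exists>m>0. is_unitary (m*n) U \<and>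
      (\<forall>\<rho>. density n \<rho> \<longrightarrow> kraus_apply n Ks \<rho> = ptrace_B m n (U * kron m n (proj0 m) \<rho> * dag U))}"

end

theory Submission
  imports Defs "Jordan_Normal_Form.Spectral_Radius"
begin


lemma mult_idx:
  assumes "A \<in> carrier_mat a b" "B \<in> carrier_mat b c" "i < a" "j < c"
  shows "(A * B) $$ (i,j) = (\<Sum>l<b. A $$ (i,l) * B $$ (l,j))"
  using assms by (auto simp: scalar_prod_def lessThan_atLeast0 intro!: sum.cong)

lemma rowcol:
  "i < dim_row A \<Longrightarrow> j < dim_col B \<Longrightarrow> dim_col A = dim_row B \<Longrightarrow> Matrix.row A i \<bullet> col B j = (\<Sum>l<dim_col A. A $$ (i,l) * B $$ (l,j))"
  by (auto simp: scalar_prod_def lessThan_atLeast0 intro!: sum.cong)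

lemma swap_in: "(\<Sum>a\<in>A. \<Sum>b\<in>B. \<Sum>c\<in>C. f a b c) = (\<Sum>b\<in>B. \<Sum>c\<in>C. \<Sum>a\<in>A. f a b c)"
  by (subst sum.swap) (simp add: sum.swap[of _ A C])

lemma sum_delta_l: "(\<Sum>k<(N::nat). (if i = k then 1 else 0) * f k) = (if i < N then f i else (0::'a::comm_semiring_1))"
  by (subst sum.cong[OF refl, of _ _ "\<lambda>k. if i = k then f k else 0"]) (auto simp: sum.delta)
lemma sum_delta_r: "(\<Sum>k<(N::nat). f k * (if k = j then 1 else 0)) = (if j < N then f j else (0::'a::comm_semiring_1))"
  by (subst sum.cong[OF refl, of _ _ "\<lambda>k. if k = j then f k else 0"]) (auto simp: sum.delta')

lemma dag_carrier[simp]: "A \<in> carrier_mat a b \<Longrightarrow> dag A \<in> carrier_mat b a"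
  by (auto simp: dag_def)

lemma dag_dims[simp]: "dim_row (dag A) = dim_col A" "dim_col (dag A) = dim_row A"
  by (auto simp: dag_def)

lemma dag_idx[simp]: "i < dim_col A \<Longrightarrow> j < dim_row A \<Longrightarrow> dag A $$ (i,j) = cnj (A $$ (j,i))"
  by (auto simp: dag_def)

lemma dag_dag[simp]: "dag (dag A) = A"
  by (rule eq_matI) auto

lemma dag_mult:
  assumes "A \<in> carrier_mat a b" "B \<in> carrier_mat b c"
  shows "dag (A * B) = dag B * dag A"
proof (rule eq_matI)
  fix i j assume "i < dim_row (dag B * dag A)" "j < dim_col (dag B * dag A)"
  then show "dag (A * B) $$ (i, j) = (dag B * dag A) $$ (i, j)"
  proof -
    have ij: "i < c" "j < a" using \<open>i < dim_row (dag B * dag A)\<close> \<open>j < dim_col (dag B * dag A)\<close> assms by auto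
    have "dag (A * B) $$ (i, j) = cnj ((A*B) $$ (j,i))" using ij assms by simp
    also have "\<dots> = (\<Sum>l<b. cnj (A $$ (j,l)) * cnj (B $$ (l,i)))" using ij assms by (subst mult_idx[of _ a b _ c]) (auto simp: cnj_sum)
    also have "\<dots> = (dag B * dag A) $$ (i, j)" using ij assms
      by (subst mult_idx[of _ c b _ a]) (auto simp: mult.commute intro!: sum.cong)
    finally show ?thesis .
  qed
qed (use assms in auto)

lemma dag_one[simp]: "dag (1\<^sub>m n) = 1\<^sub>m n"
  by (rule eq_matI) auto



definition qf :: "complex mat \<Rightarrow> (nat \<Rightarrow> complex) \<Rightarrow> nat \<Rightarrow> complex" where
  "qf A v N = (\<Sum>i<N. \<Sum>k<N. cnj (v i) * A $$ (i,k) * v k)"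
definition nsq :: "(nat \<Rightarrow> complex) \<Rightarrow> nat \<Rightarrow> real" where
  "nsq v N = (\<Sum>i<N. (cmod (v i))^2)"
definition mv :: "complex mat \<Rightarrow> (nat \<Rightarrow> complex) \<Rightarrow> nat \<Rightarrow> nat \<Rightarrow> complex" where
  "mv H v N = (\<lambda>p. \<Sum>k<N. H $$ (p,k) * v k)"

lemma qf_conj:
  assumes H: "H \<in> carrier_mat N N" and B: "B \<in> carrier_mat N N"
  shows "qf (dag H * B * H) v N = qf B (mv H v N) N"
proof -
  have e: "(dag H * B * H) $$ (i,k) = (\<Sum>q<N. (\<Sum>p<N. cnj (H $$ (p,i)) * B $$ (p,q)) * H $$ (q,k))"
    if "i < N" "k < N" for i k
    using that H B by (simp add: rowcol)
  have "qf (dag H * B * H) v N = (\<Sum>i<N. \<Sum>k<N. \<Sum>q<N. \<Sum>p<N. cnj (v i) * cnj (H $$ (p,i)) * B $$ (p,q) * H $$ (q,k) * v k)"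
    unfolding qf_def by (simp add: e sum_distrib_left sum_distrib_right mult_ac)
  also have "\<dots> = (\<Sum>i<N. \<Sum>q<N. \<Sum>p<N. \<Sum>k<N. cnj (v i) * cnj (H $$ (p,i)) * B $$ (p,q) * H $$ (q,k) * v k)"
    by (rule sum.cong[OF refl], rule swap_in)
  also have "\<dots> = (\<Sum>q<N. \<Sum>p<N. \<Sum>i<N. \<Sum>k<N. cnj (v i) * cnj (H $$ (p,i)) * B $$ (p,q) * H $$ (q,k) * v k)"
    by (rule swap_in)
  also have "\<dots> = (\<Sum>p<N. \<Sum>q<N. \<Sum>i<N. \<Sum>k<N. cnj (v i) * cnj (H $$ (p,i)) * B $$ (p,q) * H $$ (q,k) * v k)"
    by (rule sum.swap)
  also have "\<dots> = qf B (mv H v N) N"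
    unfolding qf_def mv_def by (simp add: cnj_sum sum_distrib_left sum_distrib_right mult_ac)
  finally show ?thesis .
qed

lemma qf_one: "qf (1\<^sub>m N) v N = of_real (nsq v N)"
proof -
  have "qf (1\<^sub>m N) v N = (\<Sum>i<N. cnj (v i) * v i)"
    unfolding qf_def by (auto intro!: sum.cong simp: if_distrib if_distribR sum.delta cong: if_cong)
  also have "\<dots> = of_real (nsq v N)" unfolding nsq_def
    by (simp add: complex_mult_cnj cmod_power2 mult.commute)
  finally show ?thesis .
qed

lemma nsq_unitary:
  assumes H: "H \<in> carrier_mat N N" and u: "dag H * H = 1\<^sub>m N"
  shows "nsq (mv H v N) N = nsq v N"
proof -
  have "dag H * 1\<^sub>m N * H = 1\<^sub>m N" using H u by simp
  then have "qf (1\<^sub>m N) v N = qf (1\<^sub>m N) (mv H v N) N"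
    using qf_conj[OF H one_carrier_mat, of v] by simp
  then show ?thesis by (simp add: qf_one)
qed



definition hh :: "nat \<Rightarrow> (nat \<Rightarrow> complex) \<Rightarrow> complex mat" where
  "hh N u = mat N N (\<lambda>(i,j). (if i = j then 1 else 0) - 2 * u i * cnj (u j) / of_real (nsq u N))"

lemma hh_carrier[simp]: "hh N u \<in> carrier_mat N N" by (simp add: hh_def)
lemma hh_dims[simp]: "dim_row (hh N u) = N" "dim_col (hh N u) = N" by (simp_all add: hh_def)
lemma hh_idx: "i < N \<Longrightarrow> j < N \<Longrightarrow> hh N u $$ (i,j) = (if i = j then 1 else 0) - 2 * u i * cnj (u j) / of_real (nsq u N)"
  by (simp add: hh_def)

lemma hh_dag: "dag (hh N u) = hh N u"
  by (rule eq_matI) (auto simp: hh_idx)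

lemma sum_cnj_nsq: "(\<Sum>k<N. cnj (u k) * u k) = of_real (nsq u N)"
  unfolding nsq_def by (simp add: complex_mult_cnj cmod_power2 mult.commute)

lemma hh_sq:
  assumes s: "nsq u N \<noteq> 0"
  shows "hh N u * hh N u = 1\<^sub>m N"
proof (rule eq_matI)
  fix i j assume ij: "i < dim_row (1\<^sub>m N)" "j < dim_col (1\<^sub>m N)"
  define s' where "s' = (of_real (nsq u N) :: complex)"
  have s'0: "s' \<noteq> 0" using s by (simp add: s'_def)
  let ?d = "\<lambda>i j. (if i = j then 1 else 0) :: complex"
  have "(hh N u * hh N u) $$ (i,j) = (\<Sum>k<N. (?d i k - 2 * u i * cnj (u k) / s') * (?d k j - 2 * u k * cnj (u j) / s'))"
    using ij by (simp add: rowcol hh_idx s'_def)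
  also have "\<dots> = (\<Sum>k<N. ?d i k * ?d k j) + (\<Sum>k<N. (2 * u i * cnj (u k) / s') * (2 * u k * cnj (u j) / s'))
       - (\<Sum>k<N. (2 * u i * cnj (u k) / s') * ?d k j) - (\<Sum>k<N. ?d i k * (2 * u k * cnj (u j) / s'))"
    by (simp only: sum.distrib[symmetric] sum_subtractf[symmetric] left_diff_distrib right_diff_distrib diff_diff_eq2 diff_add_eq)
  also have "(\<Sum>k<N. (2 * u i * cnj (u k) / s') * (2 * u k * cnj (u j) / s')) = 4 * u i * cnj (u j) / s'^2 * (\<Sum>k<N. cnj (u k) * u k)"
    by (simp add: sum_distrib_left power2_eq_square algebra_simps sum_divide_distrib)
  also have "(\<Sum>k<N. cnj (u k) * u k) = s'" by (simp add: sum_cnj_nsq s'_def)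
  also have "(\<Sum>k<N. ?d i k * ?d k j) = ?d i j" using ij by (simp only: sum_delta_l sum_delta_r) simp
  also have "(\<Sum>k<N. ?d i k * (2 * u k * cnj (u j) / s')) = 2 * u i * cnj (u j) / s'" using ij
    by (simp only: sum_delta_l sum_delta_r) simp
  also have "(\<Sum>k<N. (2 * u i * cnj (u k) / s') * ?d k j) = 2 * u i * cnj (u j) / s'" using ij
    by (simp only: sum_delta_l sum_delta_r) simp
  also have "?d i j + 4 * u i * cnj (u j) / s'^2 * s' - 2 * u i * cnj (u j) / s' - 2 * u i * cnj (u j) / s' = ?d i j"
    using s'0 by (simp add: power2_eq_square)
  finally show "(hh N u * hh N u) $$ (i,j) = 1\<^sub>m N $$ (i,j)"
    using ij by simp
qed auto



lemma nsq_Suc: "nsq v (Suc N) = (cmod (v 0))^2 + nsq (\<lambda>i. v (Suc i)) N"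
  unfolding nsq_def by (rule sum.lessThan_Suc_shift)

lemma cnj_mult_self: "cnj z * z = of_real ((cmod z)^2)"
  by (simp add: complex_mult_cnj cmod_power2 mult.commute)

lemma householder:
  assumes v1: "nsq v (Suc N) = 1"
  shows "\<exists>u t. nsq u (Suc N) \<noteq> 0 \<and> (\<forall>i<Suc N. hh (Suc N) u $$ (i,0) = t * v i)"
proof -
  define r where "r = cmod (v 0)"
  define \<sigma> where "\<sigma> = (if v 0 = 0 then 1 else v 0 / of_real r)"
  define u where "u = (\<lambda>i. if i = 0 then v 0 + \<sigma> else v i)"
  have r0: "r \<ge> 0" by (simp add: r_def)
  have v0: "v 0 = of_real r * \<sigma>" by (simp add: \<sigma>_def r_def)
  have ss: "cnj \<sigma> * \<sigma> = 1"
  proof (cases "v 0 = 0")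
    case True then show ?thesis by (simp add: \<sigma>_def)
  next
    case False
    then have "r \<noteq> 0" by (simp add: r_def)
    then show ?thesis using False
      by (simp add: \<sigma>_def r_def cnj_mult_self power2_eq_square)
  qed
  have cs: "cmod \<sigma> = 1"
  proof -
    have "(cmod \<sigma>)^2 = 1" using ss by (metis cnj_mult_self of_real_eq_1_iff)
    then show ?thesis by (smt (verit) norm_ge_zero power2_eq_1_iff)
  qed
  have u0: "u 0 = of_real (r + 1) * \<sigma>" using v0 by (simp add: u_def algebra_simps)
  have rest: "nsq (\<lambda>i. v (Suc i)) N = 1 - r^2" using v1 by (simp add: nsq_Suc r_def)
  have nu: "nsq u (Suc N) = 2 + 2 * r"
  proof -
    have "nsq u (Suc N) = (cmod (u 0))^2 + nsq (\<lambda>i. v (Suc i)) N" by (simp add: nsq_Suc u_def)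
    also have "cmod (u 0) = r + 1" using r0 cs by (simp add: u0 norm_mult)
    finally show ?thesis using rest by (simp add: power2_eq_square algebra_simps)
  qed
  have "\<forall>i<Suc N. hh (Suc N) u $$ (i,0) = (- cnj \<sigma>) * v i"
  proof (intro allI impI)
    fix i assume i: "i < Suc N"
    have c: "2 * cnj (u 0) / of_real (nsq u (Suc N)) = cnj \<sigma>"
    proof -
      have e: "(of_real (2 + 2 * r) :: complex) = 2 * of_real (r + 1)" by simp
      have d: "(of_real (r + 1) :: complex) \<noteq> 0" using r0 by (simp only: of_real_eq_0_iff)
      have "2 * cnj (u 0) / of_real (nsq u (Suc N)) = (2 * of_real (r + 1)) * cnj \<sigma> / (2 * of_real (r + 1))"
        by (simp only: nu e u0 complex_cnj_mult complex_cnj_complex_of_real mult.assoc)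
      also have "\<dots> = cnj \<sigma>"
        by (rule nonzero_mult_div_cancel_left) (metis d mult_eq_0_iff zero_neq_numeral)
      finally show ?thesis .
    qed
    have "hh (Suc N) u $$ (i,0) = (if i = 0 then 1 else 0) - u i * (2 * cnj (u 0) / of_real (nsq u (Suc N)))"
      using i by (simp add: hh_idx)
    also have "\<dots> = (if i = 0 then 1 else 0) - u i * cnj \<sigma>" by (simp only: c)
    also have "\<dots> = (- cnj \<sigma>) * v i"
    proof (cases "i = 0")
      case True
      have a: "of_real (r+1) * \<sigma> * cnj \<sigma> = of_real (r+1)" by (metis ss mult.assoc mult.commute mult.right_neutral)
      have b: "cnj \<sigma> * (of_real r * \<sigma>) = of_real r" by (metis ss mult.left_commute mult.right_neutral)
      show ?thesis using True by (simp add: u0 v0 a b del: of_real_add) simp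
    qed (simp add: u_def)
    finally show "hh (Suc N) u $$ (i,0) = (- cnj \<sigma>) * v i" .
  qed
  moreover have "nsq u (Suc N) \<noteq> 0" using nu r0 by simp
  ultimately show ?thesis by blast
qed



lemma matvec_idx:
  fixes x :: "'a::comm_semiring_1 vec"
  assumes "A \<in> carrier_mat n m" "x \<in> carrier_vec m" "p < n"
  shows "(A *\<^sub>v x) $ p = (\<Sum>q<m. A $$ (p,q) * x $ q)"
  using assms by (auto simp: scalar_prod_def lessThan_atLeast0 intro!: sum.cong)

lemma vec_nonzero:
  fixes x :: "'a::zero vec"
  assumes "x \<in> carrier_vec n" "x \<noteq> 0\<^sub>v n"
  shows "\<exists>i<n. x $ i \<noteq> 0"
proof (rule ccontr)
  assume "\<not> ?thesis"
  then have "x = 0\<^sub>v n" using assms(1) by (intro eq_vecI) auto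
  with assms(2) show False by simp
qed

lemma nsq_pos:
  assumes "i < n" "v i \<noteq> 0"
  shows "nsq v n > 0"
proof -
  have "(cmod (v i))^2 \<le> nsq v n" unfolding nsq_def
    by (rule member_le_sum) (use assms in auto)
  moreover have "(cmod (v i))^2 > 0" using assms by simp
  ultimately show ?thesis by linarith
qed

lemma nsq_nonneg: "nsq v n \<ge> 0" unfolding nsq_def by (simp add: sum_nonneg)

lemma eigen_unit:
  assumes U: "U \<in> carrier_mat N N" and ev: "eigenvalue U lam"
  shows "\<exists>w. nsq w N = 1 \<and> (\<forall>p<N. (\<Sum>q<N. U $$ (p,q) * w q) = lam * w p)"
proof -
  obtain x where x: "x \<in> carrier_vec N" "x \<noteq> 0\<^sub>v N" "U *\<^sub>v x = lam \<cdot>\<^sub>v x"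
    using ev U by (auto simp: eigenvalue_def eigenvector_def)
  define nx where "nx = nsq (\<lambda>i. x $ i) N"
  obtain i where i: "i < N" "x $ i \<noteq> 0" using vec_nonzero[OF x(1,2)] by blast
  have nx0: "nx > 0" unfolding nx_def by (rule nsq_pos[of i _ "\<lambda>i. x $ i", OF i])
  define w where "w = (\<lambda>i. x $ i / of_real (sqrt nx))"
  have "nsq w N = (\<Sum>i<N. (cmod (x $ i))^2 / nx)"
    unfolding nsq_def w_def using nx0 by (simp add: norm_divide power_divide)
  also have "\<dots> = 1" using nx0 by (simp add: sum_divide_distrib[symmetric] nx_def nsq_def)
  finally have w1: "nsq w N = 1" .
  have "(\<Sum>q<N. U $$ (p,q) * w q) = lam * w p" if p: "p < N" for p
  proof -
    have "(\<Sum>q<N. U $$ (p,q) * x $ q) = lam * x $ p"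
      using arg_cong[OF x(3), of "\<lambda>v. v $ p"] matvec_idx[OF U x(1) p] p x(1) by simp
    then have "(\<Sum>q<N. U $$ (p,q) * x $ q) / of_real (sqrt nx) = lam * x $ p / of_real (sqrt nx)" by simp
    then show ?thesis unfolding w_def by (simp add: sum_divide_distrib)
  qed
  with w1 show ?thesis by blast
qed



lemma spectral_lb:
  assumes "U \<in> carrier_mat N N" "dag U * U = 1\<^sub>m N" "\<forall>l. eigenvalue U l \<longrightarrow> c \<le> Re l"
  shows "c * nsq v N \<le> Re (qf U v N)"
  using assms
proof (induction N arbitrary: U v)
  case 0 then show ?case by (simp add: nsq_def qf_def)
next
  case (Suc N)
  define N1 where "N1 = Suc N"
  have U: "U \<in> carrier_mat N1 N1" and uU: "dag U * U = 1\<^sub>m N1"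
    and evc: "\<forall>l. eigenvalue U l \<longrightarrow> c \<le> Re l" using Suc.prems by (auto simp: N1_def)
  obtain lam where ev: "eigenvalue U lam" using spectrum_non_empty[OF U] by (auto simp: spectrum_def N1_def)
  obtain w where w1: "nsq w N1 = 1" and Uw: "\<And>p. p < N1 \<Longrightarrow> (\<Sum>q<N1. U $$ (p,q) * w q) = lam * w p"
    using eigen_unit[OF U ev] by blast
  obtain u t where u: "nsq u N1 \<noteq> 0" and Hc: "\<And>i. i < N1 \<Longrightarrow> hh N1 u $$ (i,0) = t * w i"
    using householder[of w N] w1 unfolding N1_def by blast
  define H where "H = hh N1 u"
  have H: "H \<in> carrier_mat N1 N1" by (simp add: H_def)
  have HH: "H * H = 1\<^sub>m N1" using hh_sq[OF u] by (simp add: H_def)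
  have dH: "dag H = H" by (simp add: H_def hh_dag)
  have Hc': "\<And>i. i < N1 \<Longrightarrow> H $$ (i,0) = t * w i" using Hc by (simp add: H_def)
  define B where "B = H * U * H"
  have B: "B \<in> carrier_mat N1 N1" using H U by (simp add: B_def)
  have HHX: "H * (H * X) = X" if "X \<in> carrier_mat N1 k" for X k
    using that H HH by (simp add: assoc_mult_mat[symmetric, of _ N1 N1 _ N1 _ k])
  have UUX: "dag U * (U * X) = X" if "X \<in> carrier_mat N1 k" for X k
    using that U uU by (simp add: assoc_mult_mat[symmetric, of _ N1 N1 _ N1 _ k])
  have dB: "dag B * B = 1\<^sub>m N1"
  proof -
    have "dag B = H * (dag U * H)" unfolding B_def
      using H U by (simp add: dag_mult[of _ N1 N1 _ N1] dH assoc_mult_mat[of _ N1 N1 _ N1 _ N1] mult_carrier_mat[of _ N1 N1 _ N1])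
    then have "dag B * B = H * (dag U * H) * (H * U * H)" by (simp add: B_def)
    also have "\<dots> = H * (dag U * (H * (H * (U * H))))"
      using H U by (simp add: assoc_mult_mat[of _ N1 N1 _ N1 _ N1] mult_carrier_mat[of _ N1 N1 _ N1])
    also have "\<dots> = 1\<^sub>m N1" using H U HH by (simp add: HHX[of _ N1] UUX[of _ N1])
    finally show ?thesis .
  qed
  have BdB: "B * dag B = 1\<^sub>m N1"
    by (rule mat_mult_left_right_inverse[OF _ B dB]) (use B in simp)
  have Bc: "B $$ (i,0) = (if i = 0 then lam else 0)" if i: "i < N1" for i
  proof -
    have "B $$ (i,0) = (\<Sum>q<N1. (\<Sum>p<N1. H $$ (i,p) * U $$ (p,q)) * H $$ (q,0))"
      unfolding B_def by (subst mult_idx[of "H*U" N1 N1 H N1]) (use i H U in \<open>auto simp: rowcol intro!: sum.cong\<close>)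
    also have "\<dots> = (\<Sum>q<N1. \<Sum>p<N1. H $$ (i,p) * U $$ (p,q) * (t * w q))"
      by (simp add: Hc' sum_distrib_right)
    also have "\<dots> = (\<Sum>p<N1. \<Sum>q<N1. H $$ (i,p) * t * (U $$ (p,q) * w q))"
      by (subst sum.swap) (simp add: mult_ac)
    also have "\<dots> = (\<Sum>p<N1. H $$ (i,p) * t * (lam * w p))"
      by (simp add: sum_distrib_left[symmetric] Uw)
    also have "\<dots> = lam * (\<Sum>p<N1. H $$ (i,p) * H $$ (p,0))"
      by (simp add: Hc' sum_distrib_left mult_ac)
    also have "(\<Sum>p<N1. H $$ (i,p) * H $$ (p,0)) = (H * H) $$ (i,0)"
      using i H by (simp add: rowcol N1_def)
    finally show ?thesis using i by (simp add: HH N1_def)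
  qed
  have "(\<Sum>k<N1. cnj (B $$ (k,0)) * B $$ (k,0)) = 1"
    using arg_cong[OF dB, of "\<lambda>M. M $$ (0,0)"] B by (simp add: rowcol N1_def)
  moreover have "(\<Sum>k<N1. cnj (B $$ (k,0)) * B $$ (k,0)) = cnj lam * lam"
    by (simp add: Bc if_distrib if_distribR N1_def cong: if_cong)
  ultimately have ll: "cnj lam * lam = 1" by simp
  then have lam1: "(cmod lam)^2 = 1" by (metis cnj_mult_self of_real_eq_1_iff)
  have Br: "B $$ (0, Suc j) = 0" if j: "j < N" for j
  proof -
    have "(\<Sum>k<N1. B $$ (0,k) * cnj (B $$ (0,k))) = 1"
      using arg_cong[OF BdB, of "\<lambda>M. M $$ (0,0)"] B by (simp add: rowcol N1_def)
    then have "of_real (nsq (\<lambda>k. B $$ (0,k)) N1) = (1::complex)"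
      by (simp add: sum_cnj_nsq[symmetric] mult.commute)
    then have "nsq (\<lambda>k. B $$ (0,k)) N1 = 1" by (metis of_real_eq_1_iff)
    then have "(cmod lam)^2 + nsq (\<lambda>k. B $$ (0, Suc k)) N = 1"
      by (simp add: N1_def nsq_Suc Bc)
    then have "nsq (\<lambda>k. B $$ (0, Suc k)) N = 0" using lam1 by simp
    then have "\<forall>k\<in>{..<N}. (cmod (B $$ (0, Suc k)))^2 = 0"
      unfolding nsq_def by (subst sum_nonneg_eq_0_iff[symmetric]) auto
    then show ?thesis using j by simp
  qed
  define U' where "U' = mat N N (\<lambda>(i,j). B $$ (Suc i, Suc j))"
  have U': "U' \<in> carrier_mat N N" by (simp add: U'_def)
  have dU': "dag U' * U' = 1\<^sub>m N"
  proof (rule eq_matI)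
    fix i j assume ij: "i < dim_row (1\<^sub>m N)" "j < dim_col (1\<^sub>m N)"
    then have ij': "i < N" "j < N" by auto
    have "(dag U' * U') $$ (i,j) = (\<Sum>k<N. cnj (B $$ (Suc k, Suc i)) * B $$ (Suc k, Suc j))"
      by (subst mult_idx[of "dag U'" N N U' N]) (use ij' U' in \<open>auto simp: U'_def intro!: sum.cong\<close>)
    also have "\<dots> = (\<Sum>k<N1. cnj (B $$ (k, Suc i)) * B $$ (k, Suc j))"
      unfolding N1_def by (simp only: sum.lessThan_Suc_shift) (simp add: Br[OF ij'(1)])
    also have "\<dots> = (dag B * B) $$ (Suc i, Suc j)"
      using ij' B by (simp add: rowcol N1_def)
    also have "\<dots> = 1\<^sub>m N $$ (i,j)" using ij' by (simp add: dB N1_def)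
    finally show "(dag U' * U') $$ (i,j) = 1\<^sub>m N $$ (i,j)" .
  qed (use U' in auto)
  have evU': "\<forall>l. eigenvalue U' l \<longrightarrow> c \<le> Re l"
  proof (intro allI impI)
    fix mu assume "eigenvalue U' mu"
    then obtain y where y: "y \<in> carrier_vec N" "y \<noteq> 0\<^sub>v N" "U' *\<^sub>v y = mu \<cdot>\<^sub>v y"
      using U' by (auto simp: eigenvalue_def eigenvector_def)
    define z where "z = vec N1 (\<lambda>i. if i = 0 then 0 else y $ (i - 1))"
    have z: "z \<in> carrier_vec N1" by (simp add: z_def)
    have Bz: "B *\<^sub>v z = mu \<cdot>\<^sub>v z"
    proof (rule eq_vecI)
      fix i assume "i < dim_vec (mu \<cdot>\<^sub>v z)"
      then have i: "i < N1" by (simp add: z_def)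
      have "(B *\<^sub>v z) $ i = (\<Sum>k<N1. B $$ (i,k) * z $ k)" by (rule matvec_idx[OF B z i])
      also have "\<dots> = (\<Sum>k<N. B $$ (i, Suc k) * y $ k)"
        unfolding N1_def by (simp only: sum.lessThan_Suc_shift) (simp add: z_def N1_def)
      also have "\<dots> = (mu \<cdot>\<^sub>v z) $ i"
      proof (cases i)
        case 0 then show ?thesis using Br by (simp add: z_def N1_def)
      next
        case (Suc i')
        then have i': "i' < N" using i by (simp add: N1_def)
        have "(\<Sum>k<N. B $$ (i, Suc k) * y $ k) = (U' *\<^sub>v y) $ i'"
          using matvec_idx[OF U' y(1) i'] i' by (simp add: U'_def Suc)
        also have "\<dots> = mu * y $ i'" using y(3) y(1) i' by simp
        finally show ?thesis using Suc i z by (simp add: z_def)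
      qed
      finally show "(B *\<^sub>v z) $ i = (mu \<cdot>\<^sub>v z) $ i" .
    qed (use B in \<open>simp add: z_def\<close>)
    have UH: "U * H = H * B"
    proof -
      have "H * B = H * (H * (U * H))" using H U by (simp add: B_def assoc_mult_mat[of _ N1 N1 _ N1 _ N1] mult_carrier_mat[of _ N1 N1 _ N1])
      also have "\<dots> = U * H" using H U by (simp add: HHX[of _ N1])
      finally show ?thesis by simp
    qed
    have Hz: "U *\<^sub>v (H *\<^sub>v z) = mu \<cdot>\<^sub>v (H *\<^sub>v z)"
    proof -
      have "U *\<^sub>v (H *\<^sub>v z) = (U * H) *\<^sub>v z" using U H z by (simp add: assoc_mult_mat_vec)
      also have "\<dots> = H *\<^sub>v (B *\<^sub>v z)" unfolding UH using H B z by (simp add: assoc_mult_mat_vec)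
      also have "\<dots> = mu \<cdot>\<^sub>v (H *\<^sub>v z)" using H z by (simp add: Bz mult_mat_vec)
      finally show ?thesis .
    qed
    have nz: "H *\<^sub>v z \<noteq> 0\<^sub>v N1"
    proof
      assume a: "H *\<^sub>v z = 0\<^sub>v N1"
      have "z = (H * H) *\<^sub>v z" using HH z by simp
      also have "\<dots> = H *\<^sub>v (H *\<^sub>v z)" using H z by (simp add: assoc_mult_mat_vec)
      also have "\<dots> = 0\<^sub>v N1" using a H by (intro eq_vecI) (auto simp: matvec_idx)
      finally have "z = 0\<^sub>v N1" .
      obtain i where i: "i < N" "y $ i \<noteq> 0" using vec_nonzero[OF y(1,2)] by blast
      have "z $ Suc i = y $ i" using i by (simp add: z_def N1_def)
      moreover have "z $ Suc i = 0" using \<open>z = 0\<^sub>v N1\<close> i by (simp add: N1_def)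
      ultimately show False using i by simp
    qed
    have "eigenvalue U mu" unfolding eigenvalue_def eigenvector_def
      using U H z Hz nz by (intro exI[of _ "H *\<^sub>v z"]) simp
    then show "c \<le> Re mu" using evc by blast
  qed
  have IH: "c * nsq y N \<le> Re (qf U' y N)" for y
    using Suc.IH[OF U' dU' evU'] .
  have UB: "U = dag H * B * H"
  proof -
    have "dag H * B * H = H * (H * (U * (H * H)))"
      using H U by (simp add: dH B_def assoc_mult_mat[of _ N1 N1 _ N1 _ N1] mult_carrier_mat[of _ N1 N1 _ N1])
    also have "\<dots> = U" using H U HH by (simp add: HHX[of _ N1])
    finally show ?thesis by simp
  qed
  define y where "y = mv H v N1"
  have q1: "qf U v N1 = qf B y N1" unfolding UB y_def by (rule qf_conj[OF H B])
  have n1: "nsq y N1 = nsq v N1" unfolding y_def by (rule nsq_unitary[OF H]) (simp add: dH HH)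
  have q2: "qf B y N1 = lam * (cnj (y 0) * y 0) + qf U' (\<lambda>i. y (Suc i)) N"
    unfolding qf_def N1_def using Br
    by (simp only: sum.lessThan_Suc_shift) (simp add: N1_def Bc U'_def mult_ac)
  have "Re (lam * (cnj (y 0) * y 0)) = Re lam * (cmod (y 0))^2"
    by (simp add: cnj_mult_self)
  moreover have "c \<le> Re lam" using evc ev by blast
  moreover have "c * nsq y N1 = c * (cmod (y 0))^2 + c * nsq (\<lambda>i. y (Suc i)) N"
    by (simp add: N1_def nsq_Suc algebra_simps)
  ultimately have "c * nsq y N1 \<le> Re (qf B y N1)"
  proof -
    assume a: "Re (lam * (cnj (y 0) * y 0)) = Re lam * (cmod (y 0))^2" and b: "c \<le> Re lam"
      and d: "c * nsq y N1 = c * (cmod (y 0))^2 + c * nsq (\<lambda>i. y (Suc i)) N"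
    have e: "c * (cmod (y 0))^2 \<le> Re lam * (cmod (y 0))^2" by (rule mult_right_mono[OF b]) simp
    have f: "Re (qf B y N1) = Re lam * (cmod (y 0))^2 + Re (qf U' (\<lambda>i. y (Suc i)) N)"
      unfolding q2 using a by (simp only: plus_complex.sel)
    show ?thesis using IH[of "\<lambda>i. y (Suc i)"] d e f by linarith
  qed
  then show ?case using q1 n1 by (simp add: N1_def)
qed



lemma eig_norm1:
  assumes U: "U \<in> carrier_mat N N" and uU: "dag U * U = 1\<^sub>m N" and ev: "eigenvalue U l"
  shows "cmod l = 1"
proof -
  obtain w where w1: "nsq w N = 1" and Uw: "\<And>p. p < N \<Longrightarrow> (\<Sum>q<N. U $$ (p,q) * w q) = l * w p"
    using eigen_unit[OF U ev] by blast
  have "nsq (mv U w N) N = nsq w N" by (rule nsq_unitary[OF U uU])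
  moreover have "nsq (mv U w N) N = (cmod l)^2 * nsq w N"
    unfolding nsq_def mv_def by (simp add: Uw norm_mult power_mult_distrib sum_distrib_left)
  ultimately have "(cmod l)^2 = 1" using w1 by simp
  then show ?thesis using norm_ge_zero[of l] by (auto simp: power2_eq_1_iff)
qed

lemma unitary_diag_bound:
  assumes U: "U \<in> carrier_mat N N" and uU: "dag U * U = 1\<^sub>m N" and N: "N > 0"
  shows "0 \<le> unitary_cost U" "unitary_cost U \<le> pi"
    "\<And>p. p < N \<Longrightarrow> cos (unitary_cost U) \<le> Re (U $$ (p,p))"
proof -
  define E where "E = {abs (Arg z) | z. eigenvalue U z}"
  have E: "E = (\<lambda>z. abs (Arg z)) ` spectrum U" by (auto simp: E_def spectrum_def)
  have fin: "finite E" unfolding E using card_finite_spectrum(1)[OF U] by simp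
  have ne: "E \<noteq> {}" unfolding E using spectrum_non_empty[OF U N] by simp
  have th: "unitary_cost U = Max E" by (simp add: unitary_cost_def E_def)
  have "Max E \<in> E" using fin ne by simp
  then obtain z0 where "Max E = abs (Arg z0)" by (auto simp: E_def)
  then show t0: "0 \<le> unitary_cost U" and tpi: "unitary_cost U \<le> pi"
    using Arg_bounded[of z0] by (auto simp: th)
  have evc: "\<forall>l. eigenvalue U l \<longrightarrow> cos (unitary_cost U) \<le> Re l"
  proof (intro allI impI)
    fix l assume ev: "eigenvalue U l"
    have l1: "cmod l = 1" by (rule eig_norm1[OF U uU ev])
    then have l0: "l \<noteq> 0" by auto
    have le: "abs (Arg l) \<le> unitary_cost U" unfolding th
      using fin ev by (intro Max_ge) (auto simp: E_def)
    have "cos (unitary_cost U) \<le> cos (abs (Arg l))"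
      by (rule cos_monotone_0_pi_le) (use le tpi in auto)
    also have "cos (abs (Arg l)) = Re l" using cos_Arg[OF l0] l1 by simp
    finally show "cos (unitary_cost U) \<le> Re l" .
  qed
  fix p assume p: "p < N"
  have "cos (unitary_cost U) * nsq (\<lambda>i. if i = p then 1 else 0) N \<le> Re (qf U (\<lambda>i. if i = p then 1 else 0) N)"
    by (rule spectral_lb[OF U uU evc])
  moreover have "nsq (\<lambda>i. if i = p then 1 else 0) N = 1"
  proof -
    have "nsq (\<lambda>i. if i = p then 1 else 0) N = (\<Sum>i<N. if i = p then 1 else 0)"
      unfolding nsq_def by (rule sum.cong) auto
    also have "\<dots> = 1" using p by simp
    finally show ?thesis .
  qed
  moreover have "qf U (\<lambda>i. if i = p then 1 else 0) N = U $$ (p,p)"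
  proof -
    have "qf U (\<lambda>i. if i = p then 1 else 0) N = (\<Sum>i<N. if i = p then U $$ (p,p) else 0)"
      unfolding qf_def by (intro sum.cong refl) (use p in \<open>auto simp: sum_delta_r\<close>)
    also have "\<dots> = U $$ (p,p)" using p by simp
    finally show ?thesis .
  qed
  ultimately show "cos (unitary_cost U) \<le> Re (U $$ (p,p))" by simp
qed



lemma sum_list_idx: "(\<Sum>K\<leftarrow>Ks. f K) = (\<Sum>j<length Ks. f (Ks ! j))"
  by (simp add: sum_list_sum_nth atLeast0LessThan)

lemma triple_idx:
  assumes "A \<in> carrier_mat a b" "B \<in> carrier_mat b c" "C \<in> carrier_mat c d" "i < a" "j < d"
  shows "(A * B * C) $$ (i,j) = (\<Sum>l<c. (\<Sum>k<b. A $$ (i,k) * B $$ (k,l)) * C $$ (l,j))"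
  by (subst mult_idx[of "A*B" a c C d]) (use assms in \<open>auto simp: rowcol intro!: sum.cong\<close>)

lemma kraus_apply_idx:
  assumes Ks: "\<forall>K\<in>set Ks. K \<in> carrier_mat n n" and r: "\<rho> \<in> carrier_mat n n"
  shows "kraus_apply n Ks \<rho> \<in> carrier_mat n n \<and> (\<forall>p<n. \<forall>q<n. kraus_apply n Ks \<rho> $$ (p,q) =
     (\<Sum>K\<leftarrow>Ks. \<Sum>k<n. \<Sum>l<n. K $$ (p,k) * \<rho> $$ (k,l) * cnj (K $$ (q,l))))"
  using Ks
proof (induction Ks)
  case Nil then show ?case by (simp add: kraus_apply_def)
next
  case (Cons K Ks)
  have K: "K \<in> carrier_mat n n" using Cons.prems by simp
  have IH: "kraus_apply n Ks \<rho> \<in> carrier_mat n n" "\<And>p q. p < n \<Longrightarrow> q < n \<Longrightarrow> kraus_apply n Ks \<rho> $$ (p,q) =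
     (\<Sum>K\<leftarrow>Ks. \<Sum>k<n. \<Sum>l<n. K $$ (p,k) * \<rho> $$ (k,l) * cnj (K $$ (q,l)))"
    using Cons by auto
  have eq: "kraus_apply n (K # Ks) \<rho> = K * \<rho> * dag K + kraus_apply n Ks \<rho>"
    by (simp add: kraus_apply_def)
  have c: "K * \<rho> * dag K \<in> carrier_mat n n" using K r by (meson mult_carrier_mat dag_carrier)
  show ?case
  proof (intro conjI allI impI)
    show "kraus_apply n (K # Ks) \<rho> \<in> carrier_mat n n" unfolding eq using c IH(1) by simp
    fix p q assume pq: "p < n" "q < n"
    have "kraus_apply n (K # Ks) \<rho> $$ (p,q) = (K * \<rho> * dag K) $$ (p,q) + kraus_apply n Ks \<rho> $$ (p,q)"
      unfolding eq using c IH(1) pq by simp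
    also have "(K * \<rho> * dag K) $$ (p,q) = (\<Sum>l<n. (\<Sum>k<n. K $$ (p,k) * \<rho> $$ (k,l)) * dag K $$ (l,q))"
      by (rule triple_idx) (use K r pq in auto)
    also have "\<dots> = (\<Sum>l<n. \<Sum>k<n. K $$ (p,k) * \<rho> $$ (k,l) * cnj (K $$ (q,l)))"
      using K pq by (auto intro!: sum.cong simp: sum_distrib_right)
    also have "\<dots> = (\<Sum>k<n. \<Sum>l<n. K $$ (p,k) * \<rho> $$ (k,l) * cnj (K $$ (q,l)))"
      by (rule sum.swap)
    finally show "kraus_apply n (K # Ks) \<rho> $$ (p,q) = (\<Sum>K\<leftarrow>K # Ks. \<Sum>k<n. \<Sum>l<n. K $$ (p,k) * \<rho> $$ (k,l) * cnj (K $$ (q,l)))"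
      using IH(2)[OF pq] by simp
  qed
qed



lemma foldr_dag_idx:
  assumes Ks: "\<forall>K\<in>set Ks. K \<in> carrier_mat n n"
  shows "foldr (\<lambda>K acc. dag K * K + acc) Ks (0\<^sub>m n n) \<in> carrier_mat n n \<and> (\<forall>a<n. \<forall>a'<n.
     foldr (\<lambda>K acc. dag K * K + acc) Ks (0\<^sub>m n n) $$ (a,a') = (\<Sum>K\<leftarrow>Ks. \<Sum>k<n. cnj (K $$ (k,a)) * K $$ (k,a')))"
  using Ks
proof (induction Ks)
  case Nil then show ?case by simp
next
  case (Cons K Ks)
  have K: "K \<in> carrier_mat n n" using Cons.prems by simp
  let ?F = "foldr (\<lambda>K acc. dag K * K + acc) Ks (0\<^sub>m n n)"
  have IH: "?F \<in> carrier_mat n n" "\<And>a a'. a < n \<Longrightarrow> a' < n \<Longrightarrow> ?F $$ (a,a') =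
     (\<Sum>K\<leftarrow>Ks. \<Sum>k<n. cnj (K $$ (k,a)) * K $$ (k,a'))"
    using Cons by auto
  have c: "dag K * K \<in> carrier_mat n n" using K by (meson mult_carrier_mat dag_carrier)
  show ?case
  proof (intro conjI allI impI)
    show "foldr (\<lambda>K acc. dag K * K + acc) (K # Ks) (0\<^sub>m n n) \<in> carrier_mat n n" using c IH(1) by simp
    fix a a' assume aa: "a < n" "a' < n"
    have "foldr (\<lambda>K acc. dag K * K + acc) (K # Ks) (0\<^sub>m n n) $$ (a,a') = (dag K * K) $$ (a,a') + ?F $$ (a,a')"
      using c IH(1) aa by simp
    also have "(dag K * K) $$ (a,a') = (\<Sum>k<n. cnj (K $$ (k,a)) * K $$ (k,a'))"
      by (subst mult_idx[of _ n n _ n]) (use K aa in \<open>auto intro!: sum.cong\<close>)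
    finally show "foldr (\<lambda>K acc. dag K * K + acc) (K # Ks) (0\<^sub>m n n) $$ (a,a') = (\<Sum>K\<leftarrow>K # Ks. \<Sum>k<n. cnj (K $$ (k,a)) * K $$ (k,a'))"
      using IH(2)[OF aa] by simp
  qed
qed

lemma idx_lt: "b < m \<Longrightarrow> p < (n::nat) \<Longrightarrow> b * n + p < m * n"
proof -
  assume "b < m" "p < n"
  then have "b * n + p < b * n + n" by simp
  also have "\<dots> = Suc b * n" by simp
  also have "\<dots> \<le> m * n" using \<open>b < m\<close> by (intro mult_le_mono1) simp
  finally show ?thesis .
qed

lemma sum_restrict: "n \<le> M \<Longrightarrow> (\<And>i. n \<le> i \<Longrightarrow> i < M \<Longrightarrow> f i = 0) \<Longrightarrow> (\<Sum>i<(M::nat). f i) = (\<Sum>i<n. f i)"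
  by (rule sum.mono_neutral_right) auto

lemma ptrace_idx:
  assumes m: "m > 0" and U: "U \<in> carrier_mat (m*n) (m*n)" and r: "\<rho> \<in> carrier_mat n n"
    and p: "p < n" and q: "q < n"
  shows "ptrace_B m n (U * kron m n (proj0 m) \<rho> * dag U) $$ (p,q) =
    (\<Sum>b<m. \<Sum>k<n. \<Sum>l<n. U $$ (b*n+p,k) * \<rho> $$ (k,l) * cnj (U $$ (b*n+q,l)))"
proof -
  define Kr where "Kr = kron m n (proj0 m) \<rho>"
  have Kr: "Kr \<in> carrier_mat (m*n) (m*n)" by (simp add: Kr_def kron_def)
  have n0: "n > 0" using p by simp
  have nm: "n \<le> m * n" using m by simp
  have Kre: "Kr $$ (r,s) = (if r < n \<and> s < n then \<rho> $$ (r,s) else 0)" if "r < m*n" "s < m*n" for r s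
  proof -
    have "r div n < m" "s div n < m" using that by (auto simp: less_mult_imp_div_less)
    then show ?thesis using that n0 by (auto simp: Kr_def kron_def proj0_def div_eq_0_iff)
  qed
  have Kre': "Kr $$ (r,s) = \<rho> $$ (r,s)" if "r < n" "s < n" for r s
    using Kre[of r s] that nm by (meson less_le_trans)
  have X: "(U * Kr * dag U) $$ (x,y) = (\<Sum>k<n. \<Sum>l<n. U $$ (x,k) * \<rho> $$ (k,l) * cnj (U $$ (y,l)))"
    if xy: "x < m*n" "y < m*n" for x y
  proof -
    have "(U * Kr * dag U) $$ (x,y) = (\<Sum>s<m*n. (\<Sum>r<m*n. U $$ (x,r) * Kr $$ (r,s)) * dag U $$ (s,y))"
      by (rule triple_idx) (use U Kr xy in auto)
    also have "\<dots> = (\<Sum>s<n. (\<Sum>r<n. U $$ (x,r) * \<rho> $$ (r,s)) * cnj (U $$ (y,s)))"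
    proof -
      have "(\<Sum>s<m*n. (\<Sum>r<m*n. U $$ (x,r) * Kr $$ (r,s)) * dag U $$ (s,y)) =
          (\<Sum>s<n. (\<Sum>r<m*n. U $$ (x,r) * Kr $$ (r,s)) * dag U $$ (s,y))"
        by (rule sum_restrict[OF nm]) (simp add: Kre)
      also have "\<dots> = (\<Sum>s<n. (\<Sum>r<n. U $$ (x,r) * \<rho> $$ (r,s)) * cnj (U $$ (y,s)))"
      proof (rule sum.cong[OF refl])
        fix s assume s: "s \<in> {..<n}"
        have sm: "s < m*n" using s nm by (meson lessThan_iff less_le_trans)
        have "(\<Sum>r<m*n. U $$ (x,r) * Kr $$ (r,s)) = (\<Sum>r<n. U $$ (x,r) * Kr $$ (r,s))"
          by (rule sum_restrict[OF nm]) (simp add: Kre sm)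
        also have "\<dots> = (\<Sum>r<n. U $$ (x,r) * \<rho> $$ (r,s))"
          using s by (intro sum.cong refl) (simp add: Kre')
        finally show "(\<Sum>r<m*n. U $$ (x,r) * Kr $$ (r,s)) * dag U $$ (s,y) = (\<Sum>r<n. U $$ (x,r) * \<rho> $$ (r,s)) * cnj (U $$ (y,s))"
          using U sm xy by simp
      qed
      finally show ?thesis .
    qed
    also have "\<dots> = (\<Sum>s<n. \<Sum>r<n. U $$ (x,r) * \<rho> $$ (r,s) * cnj (U $$ (y,s)))"
      by (simp add: sum_distrib_right)
    also have "\<dots> = (\<Sum>k<n. \<Sum>l<n. U $$ (x,k) * \<rho> $$ (k,l) * cnj (U $$ (y,l)))"
      by (rule sum.swap)
    finally show ?thesis .
  qed
  have "ptrace_B m n (U * Kr * dag U) $$ (p,q) = (\<Sum>b<m. (U * Kr * dag U) $$ (b*n+p, b*n+q))"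
    using p q by (simp add: ptrace_B_def)
  also have "\<dots> = (\<Sum>b<m. \<Sum>k<n. \<Sum>l<n. U $$ (b*n+p,k) * \<rho> $$ (k,l) * cnj (U $$ (b*n+q,l)))"
    using p q by (intro sum.cong refl X) (auto intro: idx_lt)
  finally show ?thesis by (simp add: Kr_def)
qed



definition dens :: "(nat \<Rightarrow> complex) \<Rightarrow> nat \<Rightarrow> complex mat" where
  "dens v n = mat n n (\<lambda>(i,j). v i * cnj (v j))"

lemma dens_density:
  assumes v1: "nsq v n = 1"
  shows "density n (dens v n)"
  unfolding density_def
proof (intro conjI ballI)
  show "dens v n \<in> carrier_mat n n" by (simp add: dens_def)
  show "dag (dens v n) = dens v n" by (rule eq_matI) (auto simp: dens_def)
  show "mtrace (dens v n) = 1"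
  proof -
    have "mtrace (dens v n) = (\<Sum>i<n. cnj (v i) * v i)" by (simp add: mtrace_def dens_def mult.commute)
    also have "\<dots> = 1" by (simp add: sum_cnj_nsq v1)
    finally show ?thesis .
  qed
  fix w :: "complex vec" assume w: "w \<in> carrier_vec n"
  define S where "S = (\<Sum>j<n. cnj (v j) * w $ j)"
  have "(\<Sum>i<n. cnj (w $ i) * (dens v n *\<^sub>v w) $ i) = (\<Sum>i<n. cnj (w $ i) * (v i * S))"
  proof (rule sum.cong[OF refl])
    fix i assume i: "i \<in> {..<n}"
    have "(dens v n *\<^sub>v w) $ i = (\<Sum>j<n. v i * cnj (v j) * w $ j)"
      using matvec_idx[of "dens v n" n n w i] w i by (simp add: dens_def)
    also have "\<dots> = v i * S" by (simp add: S_def sum_distrib_left mult.assoc)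
    finally show "cnj (w $ i) * (dens v n *\<^sub>v w) $ i = cnj (w $ i) * (v i * S)" by simp
  qed
  also have "\<dots> = cnj S * S" by (simp add: S_def sum_distrib_right cnj_sum mult_ac)
  also have "\<dots> = of_real ((cmod S)^2)" by (rule cnj_mult_self)
  finally show "0 \<le> Re (\<Sum>i<n. cnj (w $ i) * (dens v n *\<^sub>v w) $ i)" by simp
qed

lemma sum_two:
  assumes "k \<noteq> l" "k < n" "l < (n::nat)"
  shows "(\<Sum>i<n. f i * (if i = k then a else if i = l then b else 0)) = f k * a + f l * (b::'a::comm_ring_1)"
proof -
  have "(\<Sum>i<n. f i * (if i = k then a else if i = l then b else 0)) =
     (\<Sum>i<n. f i * (if i = k then a else 0)) + (\<Sum>i<n. f i * (if i = l then b else 0))"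
    by (subst sum.distrib[symmetric]) (rule sum.cong, use assms in auto)
  also have "\<dots> = f k * a + f l * b" using assms by (simp add: if_distrib cong: if_cong)
  finally show ?thesis .
qed

lemma polar:
  assumes H: "\<And>v. nsq v n = 1 \<Longrightarrow> (\<Sum>k<n. \<Sum>l<n. C k l * v k * cnj (v l)) = 0"
    and k: "k < n" and l: "l < n"
  shows "C k l = 0"
proof -
  have diag: "C j j = 0" if j: "j < n" for j
  proof -
    define e where "e = (\<lambda>i. if i = j then 1 else (0::complex))"
    have "nsq e n = 1"
    proof -
      have "nsq e n = (\<Sum>i<n. if i = j then 1 else 0)" unfolding nsq_def e_def by (rule sum.cong) auto
      also have "\<dots> = 1" using j by simp
      finally show ?thesis .
    qed
    then have "(\<Sum>k<n. \<Sum>l<n. C k l * e k * cnj (e l)) = 0" by (rule H)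
    moreover have "(\<Sum>k<n. \<Sum>l<n. C k l * e k * cnj (e l)) = (\<Sum>k<n. if k = j then C j j else 0)"
    proof (intro sum.cong refl)
      fix i assume "i \<in> {..<n}"
      have ce: "cnj (e l) = e l" for l by (simp add: e_def)
      show "(\<Sum>l<n. C i l * e i * cnj (e l)) = (if i = j then C j j else 0)"
        unfolding ce by (simp add: e_def sum_delta_r j)
    qed
    ultimately show ?thesis using j by simp
  qed
  show ?thesis
  proof (cases "k = l")
    case True then show ?thesis using diag k by simp
  next
    case kl: False
    have two: "(\<Sum>i<n. \<Sum>j<n. C i j * tw i * cnj (tw j)) = C k l * a * cnj b + C l k * b * cnj a"
      if tw: "tw = (\<lambda>i. if i = k then a else if i = l then b else 0)" for tw a b
    proof -
      have "(\<Sum>i<n. \<Sum>j<n. C i j * tw i * cnj (tw j)) =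
          (\<Sum>i<n. (C i k * cnj a + C i l * cnj b) * tw i)"
      proof (rule sum.cong[OF refl])
        fix i assume "i \<in> {..<n}"
        have "(\<Sum>j<n. C i j * tw i * cnj (tw j)) = (\<Sum>j<n. (C i j * tw i) * (if j = k then cnj a else if j = l then cnj b else 0))"
          by (rule sum.cong) (auto simp: tw)
        also have "\<dots> = C i k * tw i * cnj a + C i l * tw i * cnj b" by (rule sum_two[OF kl k l])
        finally show "(\<Sum>j<n. C i j * tw i * cnj (tw j)) = (C i k * cnj a + C i l * cnj b) * tw i"
          by (simp add: algebra_simps)
      qed
      also have "\<dots> = (C k k * cnj a + C k l * cnj b) * a + (C l k * cnj a + C l l * cnj b) * b"
        unfolding tw by (rule sum_two[OF kl k l])
      finally show ?thesis using diag[OF k] diag[OF l] by (simp add: algebra_simps)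
    qed
    have nsq2: "nsq tw n = (cmod a)^2 + (cmod b)^2"
      if tw: "tw = (\<lambda>i. if i = k then a else if i = l then b else 0)" for tw a b
    proof -
      have "of_real (nsq tw n) = (\<Sum>i<n. cnj (tw i) * tw i)" by (simp add: sum_cnj_nsq)
      also have "\<dots> = (\<Sum>i<n. cnj (tw i) * (if i = k then a else if i = l then b else 0))"
        unfolding tw by (rule sum.cong) auto
      also have "\<dots> = cnj (tw k) * a + cnj (tw l) * b" by (rule sum_two[OF kl k l])
      also have "\<dots> = of_real ((cmod a)^2 + (cmod b)^2)" using kl by (simp add: tw cnj_mult_self)
      finally show ?thesis by (simp only: of_real_eq_iff)
    qed
    define s where "s = complex_of_real (1 / sqrt 2)"
    have cs: "cnj s = s" by (simp add: s_def)
    have s0: "s \<noteq> 0" by (simp add: s_def)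
    have r2: "(1 / sqrt 2) * (1 / sqrt 2) = (1/2::real)"
      by (simp flip: power2_eq_square add: power_divide)
    have ss: "s * s = 1/2" unfolding s_def of_real_mult[symmetric] r2 by simp
    have ms: "(cmod s)^2 = 1/2" unfolding s_def norm_of_real power2_abs using r2 by (simp only: power2_eq_square)
    define t1 where "t1 = (\<lambda>i. if i = k then s else if i = l then s else (0::complex))"
    have "nsq t1 n = 1" using nsq2[OF t1_def] ms by simp
    then have "C k l * s * cnj s + C l k * s * cnj s = 0" using H two[OF t1_def] by simp
    moreover have "(C k l + C l k) * (s * s) = C k l * s * cnj s + C l k * s * cnj s" by (simp add: cs algebra_simps)
    ultimately have e1: "C k l + C l k = 0" unfolding ss by simp
    define t2 where "t2 = (\<lambda>i. if i = k then s else if i = l then \<i> * s else (0::complex))"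
    have "nsq t2 n = 1" using nsq2[OF t2_def] ms by (simp add: norm_mult)
    then have "C k l * s * cnj (\<i> * s) + C l k * (\<i> * s) * cnj s = 0" using H two[OF t2_def] by simp
    moreover have "\<i> * (C l k - C k l) * (s * s) = C k l * s * cnj (\<i> * s) + C l k * (\<i> * s) * cnj s" by (simp add: cs algebra_simps)
    ultimately have e2: "C l k - C k l = 0" unfolding ss using s0 by simp
    have "2 * C k l = (C k l + C l k) - (C l k - C k l)" by (simp add: algebra_simps)
    then show ?thesis using e1 e2 by simp
  qed
qed



lemma choi:
  assumes Ks: "\<forall>K\<in>set Ks. K \<in> carrier_mat n n" and m: "m > 0" and U: "U \<in> carrier_mat (m*n) (m*n)"
    and chan: "\<forall>\<rho>. density n \<rho> \<longrightarrow> kraus_apply n Ks \<rho> = ptrace_B m n (U * kron m n (proj0 m) \<rho> * dag U)"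
    and p: "p < n" and q: "q < n"
  shows "(\<Sum>j<length Ks. (Ks!j) $$ (p,p) * cnj ((Ks!j) $$ (q,q))) = (\<Sum>b<m. U $$ (b*n+p,p) * cnj (U $$ (b*n+q,q)))"
proof -
  define d where "d = length Ks"
  define A where "A k l = (\<Sum>j<d. (Ks!j) $$ (p,k) * cnj ((Ks!j) $$ (q,l)))" for k l
  define B where "B k l = (\<Sum>b<m. U $$ (b*n+p,k) * cnj (U $$ (b*n+q,l)))" for k l
  define C where "C k l = A k l - B k l" for k l
  have "C p q = 0"
  proof (rule polar[OF _ p q])
    fix v assume v1: "nsq v n = 1"
    have dr: "density n (dens v n)" by (rule dens_density[OF v1])
    have r: "dens v n \<in> carrier_mat n n" by (simp add: dens_def)
    have eq: "kraus_apply n Ks (dens v n) $$ (p,q) = ptrace_B m n (U * kron m n (proj0 m) (dens v n) * dag U) $$ (p,q)"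
      using chan dr by simp
    have L: "kraus_apply n Ks (dens v n) $$ (p,q) = (\<Sum>k<n. \<Sum>l<n. A k l * v k * cnj (v l))"
    proof -
      have "kraus_apply n Ks (dens v n) $$ (p,q) = (\<Sum>j<d. \<Sum>k<n. \<Sum>l<n. (Ks!j) $$ (p,k) * (v k * cnj (v l)) * cnj ((Ks!j) $$ (q,l)))"
        using kraus_apply_idx[OF Ks r] p q
        by (simp add: sum_list_idx d_def) (intro sum.cong refl, simp add: dens_def)
      also have "\<dots> = (\<Sum>k<n. \<Sum>l<n. \<Sum>j<d. (Ks!j) $$ (p,k) * (v k * cnj (v l)) * cnj ((Ks!j) $$ (q,l)))"
        by (rule swap_in)
      also have "\<dots> = (\<Sum>k<n. \<Sum>l<n. A k l * v k * cnj (v l))"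
        by (simp add: A_def sum_distrib_right sum_distrib_left mult_ac)
      finally show ?thesis .
    qed
    have R: "ptrace_B m n (U * kron m n (proj0 m) (dens v n) * dag U) $$ (p,q) = (\<Sum>k<n. \<Sum>l<n. B k l * v k * cnj (v l))"
    proof -
      have "ptrace_B m n (U * kron m n (proj0 m) (dens v n) * dag U) $$ (p,q) = (\<Sum>b<m. \<Sum>k<n. \<Sum>l<n. U $$ (b*n+p,k) * (v k * cnj (v l)) * cnj (U $$ (b*n+q,l)))"
        using ptrace_idx[OF m U r p q] by simp (intro sum.cong refl, simp add: dens_def)
      also have "\<dots> = (\<Sum>k<n. \<Sum>l<n. \<Sum>b<m. U $$ (b*n+p,k) * (v k * cnj (v l)) * cnj (U $$ (b*n+q,l)))"
        by (rule swap_in)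
      also have "\<dots> = (\<Sum>k<n. \<Sum>l<n. B k l * v k * cnj (v l))"
        by (simp add: B_def sum_distrib_right sum_distrib_left mult_ac)
      finally show ?thesis .
    qed
    have "(\<Sum>k<n. \<Sum>l<n. C k l * v k * cnj (v l)) = (\<Sum>k<n. \<Sum>l<n. A k l * v k * cnj (v l)) - (\<Sum>k<n. \<Sum>l<n. B k l * v k * cnj (v l))"
      by (simp add: C_def sum_subtractf left_diff_distrib)
    then show "(\<Sum>k<n. \<Sum>l<n. C k l * v k * cnj (v l)) = 0" using L R eq by simp
  qed
  then show ?thesis by (simp add: C_def A_def B_def d_def)
qed



lemma of_real_cmod_sq: "of_real ((cmod t)^2) = t * cnj t"
  by (simp add: complex_mult_cnj cmod_power2)

lemma trace_sq_bound:
  assumes K: "K \<in> carrier_mat n n"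
  shows "(cmod (mtrace K))^2 \<le> real n * (\<Sum>p<n. \<Sum>k<n. (cmod (K $$ (k,p)))^2)"
proof -
  have tr: "mtrace K = (\<Sum>p<n. K $$ (p,p))" using K by (simp add: mtrace_def)
  have "cmod (mtrace K) \<le> (\<Sum>p<n. cmod (K $$ (p,p)))" unfolding tr by (rule norm_sum)
  then have "(cmod (mtrace K))^2 \<le> (\<Sum>p<n. cmod (K $$ (p,p)))^2" by (simp add: power_mono)
  also have "\<dots> \<le> (\<Sum>p<n. (cmod (K $$ (p,p)))^2) * real n"
    using sum_squared_le_sum_of_squares[of "\<lambda>p. cmod (K $$ (p,p))" "{..<n}"] by simp
  finally have s1: "(cmod (mtrace K))^2 \<le> (\<Sum>p<n. (cmod (K $$ (p,p)))^2) * real n" .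
  have s2: "(\<Sum>p<n. (cmod (K $$ (p,p)))^2) \<le> (\<Sum>p<n. \<Sum>k<n. (cmod (K $$ (k,p)))^2)"
    by (intro sum_mono member_le_sum) auto
  show ?thesis using s1 mult_right_mono[OF s2, of "real n"] by (simp add: mult.commute)
qed



lemma lower_bound_U:
  assumes n: "n > 0" and Ksc: "kraus_channel n Ks" and m: "m > 0" and Uu: "is_unitary (m*n) U"
    and chan: "\<forall>\<rho>. density n \<rho> \<longrightarrow> kraus_apply n Ks \<rho> = ptrace_B m n (U * kron m n (proj0 m) \<rho> * dag U)"
  shows "arccos ((1 / real n) * sqrt (\<Sum>K\<leftarrow>Ks. (cmod (mtrace K))\<^sup>2)) \<le> unitary_cost U"
proof -
  have Ks: "\<forall>K\<in>set Ks. K \<in> carrier_mat n n" and FD1: "foldr (\<lambda>K acc. dag K * K + acc) Ks (0\<^sub>m n n) = 1\<^sub>m n"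
    using Ksc by (auto simp: kraus_channel_def)
  have U: "U \<in> carrier_mat (m*n) (m*n)" and uU: "dag U * U = 1\<^sub>m (m*n)" using Uu by (auto simp: is_unitary_def)
  define d where "d = length Ks"
  define T where "T = (\<Sum>K\<leftarrow>Ks. (cmod (mtrace K))\<^sup>2)"
  define tb where "tb b = (\<Sum>p<n. U $$ (b*n+p, p))" for b
  have Kj: "Ks ! j \<in> carrier_mat n n" if "j < d" for j using Ks that by (simp add: d_def)
  have trj: "mtrace (Ks ! j) = (\<Sum>p<n. (Ks!j) $$ (p,p))" if "j < d" for j
    using Kj[OF that] by (simp add: mtrace_def)
  have Tdef: "T = (\<Sum>j<d. (cmod (mtrace (Ks ! j)))\<^sup>2)" by (simp add: T_def sum_list_idx d_def)
  have "complex_of_real T = (\<Sum>j<d. mtrace (Ks!j) * cnj (mtrace (Ks!j)))"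
    unfolding Tdef by (simp only: of_real_sum of_real_cmod_sq)
  also have "\<dots> = (\<Sum>j<d. \<Sum>p<n. \<Sum>q<n. (Ks!j) $$ (p,p) * cnj ((Ks!j) $$ (q,q)))"
    by (intro sum.cong refl) (simp only: lessThan_iff trj cnj_sum sum_product)
  also have "\<dots> = (\<Sum>p<n. \<Sum>q<n. \<Sum>j<d. (Ks!j) $$ (p,p) * cnj ((Ks!j) $$ (q,q)))"
    by (rule swap_in)
  also have "\<dots> = (\<Sum>p<n. \<Sum>q<n. \<Sum>b<m. U $$ (b*n+p,p) * cnj (U $$ (b*n+q,q)))"
    unfolding d_def by (intro sum.cong refl choi[OF Ks m U chan]) auto
  also have "\<dots> = (\<Sum>b<m. \<Sum>p<n. \<Sum>q<n. U $$ (b*n+p,p) * cnj (U $$ (b*n+q,q)))"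
    by (rule swap_in[symmetric])
  also have "\<dots> = (\<Sum>b<m. tb b * cnj (tb b))"
    by (intro sum.cong refl) (simp only: tb_def cnj_sum sum_product)
  also have "\<dots> = complex_of_real (\<Sum>b<m. (cmod (tb b))^2)"
    by (simp only: of_real_sum of_real_cmod_sq)
  finally have TU: "T = (\<Sum>b<m. (cmod (tb b))^2)" by (simp only: of_real_eq_iff)
  have T0: "(cmod (tb 0))^2 \<le> T" unfolding TU by (rule member_le_sum) (use m in auto)
  have Tnn: "0 \<le> T" unfolding TU by (simp add: sum_nonneg)
  have col1: "(\<Sum>j<d. \<Sum>k<n. (cmod ((Ks!j) $$ (k,p)))^2) = 1" if p: "p < n" for p
  proof -
    have "complex_of_real (\<Sum>j<d. \<Sum>k<n. (cmod ((Ks!j) $$ (k,p)))^2) = (\<Sum>j<d. \<Sum>k<n. cnj ((Ks!j) $$ (k,p)) * (Ks!j) $$ (k,p))"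
      by (simp only: of_real_sum cnj_mult_self)
    also have "\<dots> = foldr (\<lambda>K acc. dag K * K + acc) Ks (0\<^sub>m n n) $$ (p,p)"
      using foldr_dag_idx[OF Ks] p by (simp add: sum_list_idx d_def)
    also have "\<dots> = 1" using p by (simp add: FD1)
    finally show ?thesis by (simp only: of_real_eq_1_iff)
  qed
  have "T \<le> (\<Sum>j<d. real n * (\<Sum>p<n. \<Sum>k<n. (cmod ((Ks!j) $$ (k,p)))^2))"
    unfolding Tdef by (intro sum_mono trace_sq_bound Kj) simp
  also have "\<dots> = real n * (\<Sum>p<n. \<Sum>j<d. \<Sum>k<n. (cmod ((Ks!j) $$ (k,p)))^2)"
    unfolding sum_distrib_left[symmetric] by (subst sum.swap) (rule refl)
  also have "\<dots> = real n * real n" by (simp add: col1)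
  finally have Tn: "T \<le> real n * real n" .
  define X where "X = (1 / real n) * sqrt T"
  have X0: "0 \<le> X" using Tnn by (simp add: X_def)
  have sT: "sqrt T \<le> real n"
  proof -
    have "sqrt T \<le> sqrt (real n * real n)" using Tn by (rule real_sqrt_le_mono)
    also have "\<dots> = real n" by simp
    finally show ?thesis .
  qed
  have X1: "X \<le> 1"
  proof -
    have "(1 / real n) * sqrt T \<le> (1 / real n) * real n" by (rule mult_left_mono[OF sT]) simp
    then show ?thesis using n by (simp add: X_def)
  qed
  define \<theta> where "\<theta> = unitary_cost U"
  have mn0: "m * n > 0" using m n by simp
  note ub = unitary_diag_bound[OF U uU mn0]
  have t0: "0 \<le> \<theta>" "\<theta> \<le> pi" using ub(1,2) by (auto simp: \<theta>_def)
  show ?thesis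
  proof (cases "cos \<theta> > 0")
    case False
    have "\<theta> \<ge> pi / 2"
    proof (rule ccontr)
      assume "\<not> \<theta> \<ge> pi / 2"
      then have "cos \<theta> > 0" using t0 by (intro cos_gt_zero_pi) auto
      with False show False by simp
    qed
    moreover have "arccos X \<le> pi / 2" by (rule arccos_le_pi2[OF X0 X1])
    ultimately show ?thesis by (simp add: X_def T_def \<theta>_def)
  next
    case True
    have "real n * cos \<theta> = (\<Sum>p<n. cos \<theta>)" by simp
    also have "\<dots> \<le> (\<Sum>p<n. Re (U $$ (p,p)))"
    proof (rule sum_mono)
      fix p assume p: "p \<in> {..<n}"
      have "0 * n + p < m * n" using idx_lt[OF m, of p n] p by simp
      then show "cos \<theta> \<le> Re (U $$ (p,p))" using ub(3)[of p] by (simp add: \<theta>_def)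
    qed
    also have "\<dots> = Re (tb 0)" by (simp add: tb_def)
    also have "\<dots> \<le> cmod (tb 0)" by (rule complex_Re_le_cmod)
    also have "\<dots> \<le> sqrt T" using T0 by (simp add: real_le_rsqrt)
    finally have "real n * cos \<theta> \<le> sqrt T" .
    then have "(1 / real n) * (real n * cos \<theta>) \<le> (1 / real n) * sqrt T" by (rule mult_left_mono) simp
    then have cX: "cos \<theta> \<le> X" using n by (simp add: X_def)
    have "arccos X \<le> arccos (cos \<theta>)"
      by (rule arccos_le_arccos) (use cX X1 True in auto)
    also have "\<dots> = \<theta>" using t0 by (simp add: arccos_cos)
    finally show ?thesis by (simp add: X_def T_def \<theta>_def)
  qed
qed



definition dl :: "nat \<Rightarrow> nat \<Rightarrow> complex" where "dl i j = (if i = j then 1 else 0)"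

definition Uf :: "(nat \<Rightarrow> nat \<Rightarrow> complex) \<Rightarrow> nat \<Rightarrow> nat \<Rightarrow> nat \<Rightarrow> nat \<Rightarrow> complex" where
  "Uf V NN n i j = (if j < n then (if i < NN then V i j else 0)
     else (if i < NN then dl i (j - n) - (\<Sum>a<n. V i a * cnj (V (j - n) a)) else cnj (V (j - n) (i - NN))))"

lemma sum_split_add: "(\<Sum>r<a+b. f r) = (\<Sum>r<a. f r) + (\<Sum>r<(b::nat). f (a + r))"
  by (induction b) (simp_all add: add_ac)

lemma dl_sum_r: "j < N \<Longrightarrow> (\<Sum>r<N. f r * dl r j) = f j"
  unfolding dl_def by (simp add: sum_delta_r)
lemma dl_sum_l: "i < N \<Longrightarrow> (\<Sum>r<N. dl i r * f r) = f i"
  unfolding dl_def by (simp add: sum_delta_l)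
lemma cnj_dl[simp]: "cnj (dl i j) = dl i j" by (simp add: dl_def)

context
  fixes V :: "nat \<Rightarrow> nat \<Rightarrow> complex" and NN n :: nat
  assumes G: "\<And>a a'. a < n \<Longrightarrow> a' < n \<Longrightarrow> (\<Sum>r<NN. cnj (V r a) * V r a') = dl a a'"
begin

lemma VVa: "j' < NN \<Longrightarrow> i < n \<Longrightarrow> (\<Sum>r<NN. cnj (V r i) * (\<Sum>a<n. V r a * cnj (V j' a))) = cnj (V j' i)"
proof -
  assume j': "j' < NN" and i: "i < n"
  have "(\<Sum>r<NN. cnj (V r i) * (\<Sum>a<n. V r a * cnj (V j' a))) = (\<Sum>r<NN. \<Sum>a<n. cnj (V r i) * V r a * cnj (V j' a))"
    by (simp add: sum_distrib_left mult.assoc)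
  also have "\<dots> = (\<Sum>a<n. (\<Sum>r<NN. cnj (V r i) * V r a) * cnj (V j' a))"
    by (subst sum.swap) (simp add: sum_distrib_right)
  also have "\<dots> = (\<Sum>a<n. dl i a * cnj (V j' a))" by (intro sum.cong refl) (simp add: G i)
  also have "\<dots> = cnj (V j' i)" by (rule dl_sum_l[OF i])
  finally show ?thesis .
qed

lemma unit_cols:
  assumes i: "i < NN + n" and j: "j < NN + n"
  shows "(\<Sum>r<NN + n. cnj (Uf V NN n r i) * Uf V NN n r j) = dl i j"
proof -
  have split: "(\<Sum>r<NN + n. cnj (Uf V NN n r i) * Uf V NN n r j) =
     (\<Sum>r<NN. cnj (Uf V NN n r i) * Uf V NN n r j) + (\<Sum>s<n. cnj (Uf V NN n (NN + s) i) * Uf V NN n (NN + s) j)"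
    by (rule sum_split_add)
  show ?thesis
  proof (cases "i < n")
    case ilt: True
    show ?thesis
    proof (cases "j < n")
      case True
      have "(\<Sum>r<NN. cnj (Uf V NN n r i) * Uf V NN n r j) = (\<Sum>r<NN. cnj (V r i) * V r j)"
        using ilt True by (intro sum.cong refl) (simp add: Uf_def)
      moreover have "(\<Sum>s<n. cnj (Uf V NN n (NN + s) i) * Uf V NN n (NN + s) j) = 0"
        using ilt by (simp add: Uf_def)
      ultimately show ?thesis using split G[OF ilt True] by simp
    next
      case False
      define j' where "j' = j - n"
      have j': "j' < NN" using False j by (simp add: j'_def)
      have "(\<Sum>r<NN. cnj (Uf V NN n r i) * Uf V NN n r j) =
          (\<Sum>r<NN. cnj (V r i) * dl r j') - (\<Sum>r<NN. cnj (V r i) * (\<Sum>a<n. V r a * cnj (V j' a)))"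
        using ilt False by (simp add: Uf_def j'_def right_diff_distrib sum_subtractf)
      also have "\<dots> = 0" using j' ilt by (simp add: dl_sum_r VVa)
      finally have a: "(\<Sum>r<NN. cnj (Uf V NN n r i) * Uf V NN n r j) = 0" .
      have b: "(\<Sum>s<n. cnj (Uf V NN n (NN + s) i) * Uf V NN n (NN + s) j) = 0"
        using ilt by (simp add: Uf_def)
      show ?thesis using split a b ilt False by (simp add: dl_def)
    qed
  next
    case ige: False
    define i' where "i' = i - n"
    have i': "i' < NN" using ige i by (simp add: i'_def)
    show ?thesis
    proof (cases "j < n")
      case True
      have Pi: "cnj (Uf V NN n r i) = dl i' r - (\<Sum>a<n. V i' a * cnj (V r a))" if "r < NN" for r
        using that ige by (simp add: Uf_def i'_def dl_def cnj_sum mult.commute)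
      have "(\<Sum>r<NN. cnj (Uf V NN n r i) * Uf V NN n r j) =
          (\<Sum>r<NN. (dl i' r - (\<Sum>a<n. V i' a * cnj (V r a))) * V r j)"
        using True by (intro sum.cong refl) (simp add: Pi Uf_def[of V NN n _ j])
      also have "\<dots> = (\<Sum>r<NN. dl i' r * V r j) - (\<Sum>r<NN. (\<Sum>a<n. V i' a * cnj (V r a)) * V r j)"
        by (simp add: left_diff_distrib sum_subtractf)
      also have "(\<Sum>r<NN. (\<Sum>a<n. V i' a * cnj (V r a)) * V r j) = cnj (\<Sum>r<NN. cnj (V r j) * (\<Sum>a<n. V r a * cnj (V i' a)))"
        by (simp add: cnj_sum sum_distrib_right sum_distrib_left mult_ac)
      also have "\<dots> = V i' j" using i' True by (simp add: VVa)
      also have "(\<Sum>r<NN. dl i' r * V r j) = V i' j" using i' by (rule dl_sum_l)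
      finally have a: "(\<Sum>r<NN. cnj (Uf V NN n r i) * Uf V NN n r j) = 0" by simp
      have b: "(\<Sum>s<n. cnj (Uf V NN n (NN + s) i) * Uf V NN n (NN + s) j) = 0"
        using True by (simp add: Uf_def)
      show ?thesis using split a b ige True by (simp add: dl_def)
    next
      case False
      define j' where "j' = j - n"
      have j': "j' < NN" using False j by (simp add: j'_def)
      define M where "M = (\<Sum>a<n. V i' a * cnj (V j' a))"
      have b: "(\<Sum>s<n. cnj (Uf V NN n (NN + s) i) * Uf V NN n (NN + s) j) = M"
        using ige False by (simp add: Uf_def M_def i'_def j'_def)
      have P: "Uf V NN n r j = dl r j' - (\<Sum>a<n. V r a * cnj (V j' a))" if "r < NN" for r
        using that False by (simp add: Uf_def j'_def)
      have Pi: "cnj (Uf V NN n r i) = dl i' r - (\<Sum>a<n. V i' a * cnj (V r a))" if "r < NN" for r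
        using that ige by (simp add: Uf_def i'_def dl_def cnj_sum mult.commute)
      have "(\<Sum>r<NN. cnj (Uf V NN n r i) * Uf V NN n r j) =
         (\<Sum>r<NN. (dl i' r - (\<Sum>a<n. V i' a * cnj (V r a))) * (dl r j' - (\<Sum>b<n. V r b * cnj (V j' b))))"
        by (intro sum.cong refl) (simp add: P Pi)
      also have "\<dots> = (\<Sum>r<NN. dl i' r * dl r j') - (\<Sum>r<NN. dl i' r * (\<Sum>b<n. V r b * cnj (V j' b)))
          - (\<Sum>r<NN. (\<Sum>a<n. V i' a * cnj (V r a)) * dl r j')
          + (\<Sum>r<NN. (\<Sum>a<n. V i' a * cnj (V r a)) * (\<Sum>b<n. V r b * cnj (V j' b)))"
        by (simp add: algebra_simps sum.distrib sum_subtractf)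
      also have "(\<Sum>r<NN. dl i' r * dl r j') = dl i' j'" using i' by (rule dl_sum_l)
      also have "(\<Sum>r<NN. dl i' r * (\<Sum>b<n. V r b * cnj (V j' b))) = M" using i' by (simp add: dl_sum_l M_def)
      also have "(\<Sum>r<NN. (\<Sum>a<n. V i' a * cnj (V r a)) * dl r j') = M" using j' by (simp add: dl_sum_r M_def)
      also have "(\<Sum>r<NN. (\<Sum>a<n. V i' a * cnj (V r a)) * (\<Sum>b<n. V r b * cnj (V j' b))) = M"
      proof -
        have "(\<Sum>r<NN. (\<Sum>a<n. V i' a * cnj (V r a)) * (\<Sum>b<n. V r b * cnj (V j' b))) =
            (\<Sum>r<NN. \<Sum>a<n. \<Sum>b<n. V i' a * (cnj (V r a) * V r b) * cnj (V j' b))"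
          by (simp only: sum_product) (simp add: mult_ac)
        also have "\<dots> = (\<Sum>a<n. \<Sum>b<n. \<Sum>r<NN. V i' a * (cnj (V r a) * V r b) * cnj (V j' b))"
          by (rule swap_in)
        also have "\<dots> = (\<Sum>a<n. \<Sum>b<n. V i' a * dl a b * cnj (V j' b))"
          by (intro sum.cong refl) (simp add: G sum_distrib_left[symmetric] sum_distrib_right[symmetric])
        also have "\<dots> = M" unfolding M_def
          by (intro sum.cong refl) (simp add: dl_def if_distrib if_distribR sum.delta cong: if_cong)
        finally show ?thesis .
      qed
      finally have a: "(\<Sum>r<NN. cnj (Uf V NN n r i) * Uf V NN n r j) = dl i' j' - M" by simp
      have "dl i' j' = dl i j" using ige False by (auto simp: dl_def i'_def j'_def)
      then show ?thesis using split a b by simp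
    qed
  qed
qed

end



lemma sum_reindex_blocks: "(\<Sum>r<d*n. f r) = (\<Sum>j<d. \<Sum>p<(n::nat). f (j*n+p))"
proof (induction d)
  case 0 then show ?case by simp
next
  case (Suc d)
  have "(\<Sum>r<Suc d * n. f r) = (\<Sum>r<d*n + n. f r)" by (simp add: add.commute)
  also have "\<dots> = (\<Sum>r<d*n. f r) + (\<Sum>p<n. f (d*n+p))" by (rule sum_split_add)
  finally show ?case using Suc by simp
qed

lemma blk_lt: "p < (n::nat) \<Longrightarrow> (b*n+p < d*n) = (b < d)"
proof
  assume p: "p < n" and "b*n+p < d*n"
  show "b < d"
  proof (rule ccontr)
    assume "\<not> b < d"
    then have "d * n \<le> b * n" by simp
    with \<open>b*n+p < d*n\<close> show False by simp
  qed
next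
  assume "p < n" "b < d" then show "b*n+p < d*n" using idx_lt by blast
qed

lemma dilation_exists:
  assumes n: "n > 0" and Ksc: "kraus_channel n Ks"
  shows "\<exists>U m. m > 0 \<and> is_unitary (m*n) U \<and>
    (\<forall>\<rho>. density n \<rho> \<longrightarrow> kraus_apply n Ks \<rho> = ptrace_B m n (U * kron m n (proj0 m) \<rho> * dag U))"
proof -
  have Ks: "\<forall>K\<in>set Ks. K \<in> carrier_mat n n" and FD1: "foldr (\<lambda>K acc. dag K * K + acc) Ks (0\<^sub>m n n) = 1\<^sub>m n"
    using Ksc by (auto simp: kraus_channel_def)
  define d where "d = length Ks"
  define NN where "NN = d * n"
  define m where "m = Suc d"
  define V where "V r a = (Ks ! (r div n)) $$ (r mod n, a)" for r a
  have Vb: "V (j*n+p) a = (Ks ! j) $$ (p, a)" if "p < n" for j p a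
    using that by (simp add: V_def)
  have G: "(\<Sum>r<NN. cnj (V r a) * V r a') = dl a a'" if a: "a < n" "a' < n" for a a'
  proof -
    have "(\<Sum>r<NN. cnj (V r a) * V r a') = (\<Sum>j<d. \<Sum>p<n. cnj ((Ks!j) $$ (p,a)) * (Ks!j) $$ (p,a'))"
      unfolding NN_def sum_reindex_blocks by (intro sum.cong refl) (simp add: Vb)
    also have "\<dots> = foldr (\<lambda>K acc. dag K * K + acc) Ks (0\<^sub>m n n) $$ (a,a')"
      using foldr_dag_idx[OF Ks] a by (simp add: sum_list_idx d_def)
    also have "\<dots> = dl a a'" using a by (simp add: FD1 dl_def)
    finally show ?thesis .
  qed
  have mn: "m * n = NN + n" by (simp add: m_def NN_def)
  define U where "U = mat (m*n) (m*n) (\<lambda>(i,j). Uf V NN n i j)"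
  have U: "U \<in> carrier_mat (m*n) (m*n)" by (simp add: U_def)
  have uU: "dag U * U = 1\<^sub>m (m*n)"
  proof (rule eq_matI)
    fix i j assume ij: "i < dim_row (1\<^sub>m (m*n))" "j < dim_col (1\<^sub>m (m*n))"
    then have ij': "i < NN + n" "j < NN + n" using mn by auto
    have "(dag U * U) $$ (i,j) = (\<Sum>r<m*n. cnj (U $$ (r,i)) * U $$ (r,j))"
      by (subst mult_idx[of _ "m*n" "m*n" _ "m*n"]) (use U ij in \<open>auto intro!: sum.cong\<close>)
    also have "\<dots> = (\<Sum>r<NN + n. cnj (Uf V NN n r i) * Uf V NN n r j)"
      unfolding mn using ij' by (intro sum.cong refl) (simp add: U_def mn)
    also have "\<dots> = dl i j" by (rule unit_cols[OF G ij'])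
    finally show "(dag U * U) $$ (i,j) = 1\<^sub>m (m*n) $$ (i,j)" using ij by (simp add: dl_def)
  qed (use U in auto)
  have Ue: "U $$ (b*n+p, k) = (if b < d then (Ks ! b) $$ (p,k) else 0)" if "b < m" "p < n" "k < n" for b p k
  proof -
    have "b*n+p < m*n" using that by (intro idx_lt)
    moreover have "k < m*n" using that by (simp add: m_def)
    ultimately have "U $$ (b*n+p, k) = Uf V NN n (b*n+p) k" by (simp add: U_def)
    also have "\<dots> = (if b < d then (Ks ! b) $$ (p,k) else 0)"
      using that by (simp add: Uf_def NN_def blk_lt Vb)
    finally show ?thesis .
  qed
  have chan: "kraus_apply n Ks \<rho> = ptrace_B m n (U * kron m n (proj0 m) \<rho> * dag U)" if r: "density n \<rho>" for \<rho>
  proof -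
    have rc: "\<rho> \<in> carrier_mat n n" using r by (simp add: density_def)
    note KA = kraus_apply_idx[OF Ks rc]
    show ?thesis
    proof (rule eq_matI)
      fix p q assume pq: "p < dim_row (ptrace_B m n (U * kron m n (proj0 m) \<rho> * dag U))"
        "q < dim_col (ptrace_B m n (U * kron m n (proj0 m) \<rho> * dag U))"
      then have pq': "p < n" "q < n" by (auto simp: ptrace_B_def)
      have "ptrace_B m n (U * kron m n (proj0 m) \<rho> * dag U) $$ (p,q) =
          (\<Sum>b<m. \<Sum>k<n. \<Sum>l<n. U $$ (b*n+p,k) * \<rho> $$ (k,l) * cnj (U $$ (b*n+q,l)))"
        by (rule ptrace_idx) (use U rc pq' in \<open>auto simp: m_def\<close>)
      also have "\<dots> = (\<Sum>b<m. if b < d then (\<Sum>k<n. \<Sum>l<n. (Ks!b) $$ (p,k) * \<rho> $$ (k,l) * cnj ((Ks!b) $$ (q,l))) else 0)"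
        using pq' by (intro sum.cong refl) (auto simp: Ue)
      also have "\<dots> = (\<Sum>b<d. \<Sum>k<n. \<Sum>l<n. (Ks!b) $$ (p,k) * \<rho> $$ (k,l) * cnj ((Ks!b) $$ (q,l)))"
        by (simp add: m_def)
      also have "\<dots> = kraus_apply n Ks \<rho> $$ (p,q)"
        using KA pq' by (simp add: sum_list_idx d_def)
      finally show "kraus_apply n Ks \<rho> $$ (p,q) = ptrace_B m n (U * kron m n (proj0 m) \<rho> * dag U) $$ (p,q)"
        by simp
    qed (use KA in \<open>auto simp: ptrace_B_def\<close>)
  qed
  show ?thesis
    by (rule exI[of _ U], rule exI[of _ m]) (use U uU chan in \<open>auto simp: m_def is_unitary_def\<close>)
qed


theorem theorem2:
  fixes n :: nat and Ks :: "complex mat list"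
  assumes "n > 0" and "kraus_channel n Ks"
  shows "arccos ((1 / real n) * sqrt (\<Sum>K\<leftarrow>Ks. (cmod (mtrace K))\<^sup>2)) \<le> channel_cost n Ks"
  unfolding channel_cost_def
proof (rule cInf_greatest)
  show "{unitary_cost U |U. \<exists>m>0. is_unitary (m * n) U \<and>
      (\<forall>\<rho>. density n \<rho> \<longrightarrow> kraus_apply n Ks \<rho> = ptrace_B m n (U * kron m n (proj0 m) \<rho> * dag U))} \<noteq> {}"
    using dilation_exists[OF assms] by auto
  fix x assume "x \<in> {unitary_cost U |U. \<exists>m>0. is_unitary (m * n) U \<and>
      (\<forall>\<rho>. density n \<rho> \<longrightarrow> kraus_apply n Ks \<rho> = ptrace_B m n (U * kron m n (proj0 m) \<rho> * dag U))}"
  then show "arccos ((1 / real n) * sqrt (\<Sum>K\<leftarrow>Ks. (cmod (mtrace K))\<^sup>2)) \<le> x"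
    using lower_bound_U[OF assms] by auto
qed

end
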